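(* Let $B$ be the Meissel–Mertens constant. Assume that there exist $a>0$, $r\in\mathbb{Z}_{\geqslant 2}$ and $T_1\geqslant 2$ such that $|\pi(t)-\mathrm{li}(t)|\leqslant\frac{at}{(\log t)^r}$ for all $t\geqslant T_1$, and that there exist $b>0$, $s\in\mathbb{Z}_{\geqslant 1}$ and $T_2\geqslant 2$ such that $\sum_{p\leqslant t}\frac1p\leqslant\log\log t+B+\frac{b}{(\log t)^s}$ for all $t\geqslant T_2$. Set $\mathfrak{m}:=\frac2\pi\left(\sqrt{\pi^2-4}-2\arccos\frac2\pi\right)$. Then for all real $q\geqslant 1$, all $T,x$ with $\max(e^q,T_1,T_2)\leqslant T\leqslant x$, and all $v\in[0,1]$, $$\sum_{p\leqslant x}\frac{|\tau(p;v)|}{p}<2B+\frac{4a\zeta(r)}{(2\pi)^r}+\frac{14a}{(\log T)^r}+\frac{2b}{(\log T)^s}+E,$$ where $E=2\log\log x$ if $0\leqslant v\leqslant\frac{q}{\log x}$; $E=\frac4\pi\log\log x-\left(2-\frac4\pi\right)\log\frac vq+4\mathfrak{m}q^{-1}$ if $\frac{q}{\log x}\leqslant v\leqslant\frac{q}{\log T}$; $E=\frac4\pi\log\log x+\frac4\pi\log\frac vq+2\log\log T+4\mathfrak{m}q^{-1}$ if $\frac{q}{\log T}\leqslant v\leqslant 1$.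
   Context: For $n\in\mathbb{Z}_{\geqslant 1}$ and $v\in\mathbb{R}$, $\tau(n;v):=\sum_{d\mid n}d^{iv}$ (so $\tau(p;v)=1+p^{iv}$ for a prime $p$). Sums over $p$ run over primes; $\pi(t)$ is the prime counting function, $\mathrm{li}$ the logarithmic integral, $\zeta$ the Riemann zeta function, and $B=\lim_{x\to\infty}\left(\sum_{p\leqslant x}\frac1p-\log\log x\right)\approx 0.26149$ the Meissel–Mertens constant. *)

theory Defs
  imports "HOL-Analysis.Analysis" "HOL-Computational_Algebra.Primes"
begin

(* tau(n;v) = sum_{d | n} d^{iv}, with d^{iv} = exp(i v ln d) *)
definition tau :: "nat \<Rightarrow> real \<Rightarrow> complex" where
  "tau n v = (\<Sum>d | d dvd n. cis (v * ln (real d)))"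

definition prime_pi :: "real \<Rightarrow> real" where
  "prime_pi t = real (card {p::nat. prime p \<and> real p \<le> t})"

definition li :: "real \<Rightarrow> real" where
  "li t = Lim (at_right 0)
     (\<lambda>\<epsilon>. integral {0..1-\<epsilon>} (\<lambda>u. 1 / ln u) + integral {1+\<epsilon>..t} (\<lambda>u. 1 / ln u))"

definition zeta_nat :: "nat \<Rightarrow> real" where
  "zeta_nat r = (\<Sum>n. 1 / real (Suc n) ^ r)"

definition mertens_B :: real where
  "mertens_B = Lim at_top (\<lambda>x::real. (\<Sum>p | prime p \<and> real p \<le> x. 1 / real p) - ln (ln x))"

definition frak_m :: real where
  "frak_m = 2 / pi * (sqrt (pi\<^sup>2 - 4) - 2 * arccos (2 / pi))"

end

theory Submission
  imports Defs "HOL-Real_Asymp.Real_Asymp"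
begin


lemma inv_ln_cont1: "1 < a \<Longrightarrow> continuous_on {a..b} (\<lambda>u::real. 1 / ln u)"
  by (intro continuous_intros) auto

definition Hf :: "real \<Rightarrow> real" where
  "Hf u = (if u = 1 then 1/2 else 1 / ln u - 1/(u-1))"

lemma Hf_cont: "continuous_on {1/2..2} Hf"
proof -
  have "isCont Hf u" if u: "u \<in> {1/2..2}" for u
  proof (cases "u = 1")
    case True
    have 1: "((\<lambda>u::real. 1 / ln u - 1/(u-1)) \<longlongrightarrow> 1/2) (at 1)" by real_asymp
    have "\<forall>\<^sub>F w in at 1. 1 / ln w - 1/(w-1) = Hf w"
      by (auto simp: eventually_at_filter Hf_def)
    with 1 have "(Hf \<longlongrightarrow> 1/2) (at 1)" by (rule Lim_transform_eventually)
    then show ?thesis using True by (simp add: isCont_def Hf_def)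
  next
    case False
    have ev: "\<forall>\<^sub>F w in nhds u. 1 / ln w - 1/(w-1) = Hf w"
    proof -
      have "\<forall>\<^sub>F w in nhds u. w \<in> - {1::real}"
        using False by (intro eventually_nhds_in_open) auto
      then show ?thesis by eventually_elim (auto simp: Hf_def)
    qed
    have "isCont (\<lambda>w. 1 / ln w - 1/(w-1)) u"
      using False u by (intro continuous_intros) auto
    then show "isCont Hf u"
      using isCont_cong[OF ev] by simp
  qed
  then show ?thesis by (simp add: continuous_at_imp_continuous_on)
qed

lemma inv_ln_cont0: "continuous_on {0..1/2} (\<lambda>u::real. 1 / ln u)"
proof -
  have "continuous (at u within {0..1/2}) (\<lambda>u::real. 1 / ln u)" if u: "u \<in> {0..1/2}" for u
  proof (cases "u = 0")
    case True
    have "((\<lambda>u::real. 1 / ln u) \<longlongrightarrow> 0) (at_right 0)" by real_asymp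
    then show ?thesis using True
      by (simp add: continuous_within at_within_Icc_at_right)
  next
    case False
    then have "isCont (\<lambda>u::real. 1 / ln u) u" using u
      by (intro continuous_intros) auto
    then show ?thesis by (simp add: continuous_at_imp_continuous_within)
  qed
  then show ?thesis by (simp add: continuous_on_eq_continuous_within)
qed

lemma int_inv_left:
  assumes e: "0 < e" "e < 1/2"
  shows "((\<lambda>u::real. 1/(u-1)) has_integral (ln e - ln (1/2))) {1/2..1-e}"
proof -
  have "((\<lambda>u. ln (1-u)) has_vector_derivative 1/(u-1)) (at u within {1/2..1-e})"
    if "u \<in> {1/2..1-e}" for u
  proof -
    have "((\<lambda>u. ln (1-u)) has_real_derivative (1/(1-u)) * (-1)) (at u)"
      using that e by (auto intro!: derivative_eq_intros)
    moreover have "(1/(1-u)) * (-1) = 1/(u-1)" using that e by (simp add: field_simps)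
    ultimately show ?thesis
      by (simp add: has_real_derivative_iff_has_vector_derivative has_vector_derivative_at_within)
  qed
  from fundamental_theorem_of_calculus[OF _ this] e show ?thesis by simp
qed

lemma int_inv_right:
  assumes e: "0 < e" "e < 1/2"
  shows "((\<lambda>u::real. 1/(u-1)) has_integral (- ln e)) {1+e..2}"
proof -
  have "((\<lambda>u. ln (u-1)) has_vector_derivative 1/(u-1)) (at u within {1+e..2})"
    if "u \<in> {1+e..2}" for u
  proof -
    have "((\<lambda>u. ln (u-1)) has_real_derivative (1/(u-1)) * 1) (at u)"
      using that e by (auto intro!: derivative_eq_intros)
    then show ?thesis
      by (simp add: has_real_derivative_iff_has_vector_derivative has_vector_derivative_at_within)
  qed
  from fundamental_theorem_of_calculus[OF _ this] e show ?thesis by simp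
qed

definition Gf :: "real \<Rightarrow> real" where "Gf x = integral {1/2..x} Hf"

definition Phi2 :: "real \<Rightarrow> real" where
  "Phi2 e = integral {0..1-e} (\<lambda>u. 1 / ln u) + integral {1+e..2} (\<lambda>u. 1 / ln u)"

lemma Phi2_eq:
  assumes e: "0 < e" "e < 1/2"
  shows "Phi2 e = integral {0..1/2} (\<lambda>u::real. 1 / ln u) + ln 2 + Gf (1-e) + (Gf 2 - Gf (1+e))"
proof -
  let ?f = "\<lambda>u::real. 1 / ln u"
  have HI: "Hf integrable_on {1/2..2}" using Hf_cont by (rule integrable_continuous_real)
  have HI1: "Hf integrable_on {1/2..1-e}" using HI by (rule integrable_on_subinterval) (use e in auto)
  have HI2: "Hf integrable_on {1/2..1+e}" using HI by (rule integrable_on_subinterval) (use e in auto)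
  have HI3: "Hf integrable_on {1+e..2}" using HI by (rule integrable_on_subinterval) (use e in auto)
  have A: "(?f has_integral integral {0..1/2} ?f) {0..1/2}"
    using inv_ln_cont0 by (intro integrable_integral integrable_continuous_real)
  have B0: "((\<lambda>u. Hf u + 1/(u-1)) has_integral (Gf (1-e) + (ln e - ln (1/2)))) {1/2..1-e}"
    unfolding Gf_def using HI1 int_inv_left[OF e] by (intro has_integral_add) auto
  have B: "(?f has_integral (Gf (1-e) + (ln e - ln (1/2)))) {1/2..1-e}"
    by (rule has_integral_spike_finite[OF _ _ B0, of "{}"]) (use e in \<open>auto simp: Hf_def\<close>)
  have AB: "(?f has_integral (integral {0..1/2} ?f + (Gf (1-e) + (ln e - ln (1/2))))) {0..1-e}"
    using has_integral_combine[OF _ _ A B] e by auto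
  have C0: "((\<lambda>u. Hf u + 1/(u-1)) has_integral (integral {1+e..2} Hf + (- ln e))) {1+e..2}"
    using HI3 int_inv_right[OF e] by (intro has_integral_add) auto
  have C: "(?f has_integral (integral {1+e..2} Hf + (- ln e))) {1+e..2}"
    by (rule has_integral_spike_finite[OF _ _ C0, of "{}"]) (use e in \<open>auto simp: Hf_def\<close>)
  have G: "integral {1+e..2} Hf = Gf 2 - Gf (1+e)"
    unfolding Gf_def using Henstock_Kurzweil_Integration.integral_combine[where a="1/2" and c="1+e" and b=2 and f=Hf] HI e by auto
  have "ln (1/2::real) = - ln 2" by (simp add: ln_div)
  then show ?thesis unfolding Phi2_def using integral_unique[OF AB] integral_unique[OF C] G by simp
qed

lemma Phi2_conv: "\<exists>L. (Phi2 \<longlongrightarrow> L) (at_right 0)"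
proof -
  have HI: "Hf integrable_on {1/2..2}" using Hf_cont by (rule integrable_continuous_real)
  have cG: "continuous_on {1/2..2} Gf" unfolding Gf_def by (rule indefinite_integral_continuous_1[OF HI])
  have iG: "isCont Gf 1"
    using cG by (rule continuous_on_interior) (auto simp: interior_atLeastAtMost_real)
  have l1: "((\<lambda>e. 1 - e) \<longlongrightarrow> (1::real)) (at_right 0)" by real_asymp
  have l2: "((\<lambda>e. 1 + e) \<longlongrightarrow> (1::real)) (at_right 0)" by real_asymp
  have t1: "((\<lambda>e. Gf (1-e)) \<longlongrightarrow> Gf 1) (at_right 0)"
    using isCont_tendsto_compose[OF iG l1] .
  have t2: "((\<lambda>e. Gf (1+e)) \<longlongrightarrow> Gf 1) (at_right 0)"
    using isCont_tendsto_compose[OF iG l2] .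
  let ?L = "integral {0..1/2} (\<lambda>u::real. 1 / ln u) + ln 2 + Gf 1 + (Gf 2 - Gf 1)"
  have t: "((\<lambda>e. integral {0..1/2} (\<lambda>u::real. 1 / ln u) + ln 2 + Gf (1-e) + (Gf 2 - Gf (1+e))) \<longlongrightarrow> ?L) (at_right 0)"
    by (intro tendsto_intros t1 t2)
  have ev: "\<forall>\<^sub>F e in at_right 0. integral {0..1/2} (\<lambda>u::real. 1 / ln u) + ln 2 + Gf (1-e) + (Gf 2 - Gf (1+e)) = Phi2 e"
  proof -
    have "\<forall>\<^sub>F e in at_right (0::real). e < 1/2" by real_asymp
    moreover have "\<forall>\<^sub>F e in at_right (0::real). 0 < e" by (simp add: eventually_at_right_less)
    ultimately show ?thesis by eventually_elim (simp add: Phi2_eq)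
  qed
  show ?thesis using Lim_transform_eventually[OF t ev] by blast
qed

lemma li_eq:
  assumes t: "t \<ge> 2"
  shows "li t = Lim (at_right 0) Phi2 + integral {2..t} (\<lambda>u. 1 / ln u)"
proof -
  obtain L where L: "(Phi2 \<longlongrightarrow> L) (at_right 0)" using Phi2_conv by blast
  have ev: "\<forall>\<^sub>F e in at_right 0. Phi2 e + integral {2..t} (\<lambda>u. 1 / ln u) =
     integral {0..1-e} (\<lambda>u. 1 / ln u) + integral {1+e..t} (\<lambda>u. 1 / ln u)"
  proof -
    have "\<forall>\<^sub>F e in at_right (0::real). e < 1/2" by real_asymp
    moreover have "\<forall>\<^sub>F e in at_right (0::real). 0 < e" by (simp add: eventually_at_right_less)
    ultimately show ?thesis
    proof eventually_elim
      case (elim e)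
      have "(\<lambda>u::real. 1 / ln u) integrable_on {1+e..t}"
        using elim t by (intro integrable_continuous_real inv_ln_cont1) auto
      then show ?case unfolding Phi2_def using Henstock_Kurzweil_Integration.integral_combine[where a="1+e" and c=2 and b=t and f="\<lambda>u::real. 1 / ln u"] elim t
        by auto
    qed
  qed
  have "((\<lambda>e. Phi2 e + integral {2..t} (\<lambda>u. 1 / ln u)) \<longlongrightarrow> L + integral {2..t} (\<lambda>u. 1 / ln u)) (at_right 0)"
    by (intro tendsto_intros L)
  from Lim_transform_eventually[OF this ev] have
    "((\<lambda>e. integral {0..1-e} (\<lambda>u. 1 / ln u) + integral {1+e..t} (\<lambda>u. 1 / ln u)) \<longlongrightarrow> L + integral {2..t} (\<lambda>u. 1 / ln u)) (at_right 0)" .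
  then have "li t = L + integral {2..t} (\<lambda>u. 1 / ln u)"
    unfolding li_def by (intro tendsto_Lim) auto
  moreover have "Lim (at_right 0) Phi2 = L" using L by (intro tendsto_Lim) auto
  ultimately show ?thesis by simp
qed

lemma li_diff:
  assumes "2 \<le> y" "y \<le> t"
  shows "li t - li y = integral {y..t} (\<lambda>u. 1 / ln u)"
proof -
  have "(\<lambda>u::real. 1 / ln u) integrable_on {2..t}"
    using assms by (intro integrable_continuous_real inv_ln_cont1) auto
  then show ?thesis using li_eq[of t] li_eq[of y] assms Henstock_Kurzweil_Integration.integral_combine[where a=2 and c=y and b=t and f="\<lambda>u::real. 1 / ln u"]
    by auto
qed


definition hq :: "real \<Rightarrow> real" where "hq a = sin a - 2 * a / pi"

lemma hq_mvt:
  assumes "a < b"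
  shows "\<exists>z. a < z \<and> z < b \<and> hq b - hq a = (b - a) * (cos z - 2 / pi)"
proof -
  have "\<exists>l z. a < z \<and> z < b \<and> DERIV hq z :> l \<and> hq b - hq a = (b - a) * l"
    unfolding hq_def using assms
    by (intro MVT) (auto intro!: continuous_intros derivative_intros
        simp: field_differentiable_imp_differentiable field_differentiable_within_sin)
  then obtain l z where z: "a < z" "z < b" "DERIV hq z :> l" "hq b - hq a = (b - a) * l" by blast
  have "DERIV hq z :> cos z - 2/pi" unfolding hq_def by (auto intro!: derivative_eq_intros)
  with z(3) have "l = cos z - 2/pi" by (rule DERIV_unique)
  with z show ?thesis by blast
qed

definition beta0 :: real where "beta0 = arccos (2/pi)"

lemma beta0: "0 \<le> beta0" "beta0 \<le> pi/2" "cos beta0 = 2/pi"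
proof -
  have "2/pi \<le> 1" using pi_gt3 by (simp add: field_simps)
  moreover have "0 \<le> 2/pi" by simp
  moreover have "-1 \<le> 2/pi" using \<open>0 \<le> 2/pi\<close> by linarith
  ultimately show "0 \<le> beta0" "beta0 \<le> pi/2" "cos beta0 = 2/pi" unfolding beta0_def
    using arccos_lbound[of "2/pi"] arccos_le_pi2[of "2/pi"] cos_arccos[of "2/pi"] by auto
qed

lemma cos_vs_beta0:
  assumes "0 \<le> z" "z \<le> pi"
  shows "z < beta0 \<Longrightarrow> cos z > 2/pi" and "z > beta0 \<Longrightarrow> cos z < 2/pi"
  using cos_mono_less_eq[of z beta0] cos_mono_less_eq[of beta0 z] beta0 assms by auto

lemma hq_le: assumes "0 \<le> a" "a \<le> pi/2" shows "hq a \<le> hq beta0"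
proof -
  consider "a < beta0" | "a = beta0" | "a > beta0" by linarith
  then show ?thesis
  proof cases
    case 1
    then obtain z where z: "a < z" "z < beta0" "hq beta0 - hq a = (beta0 - a) * (cos z - 2 / pi)"
      using hq_mvt by blast
    have "cos z > 2/pi" using cos_vs_beta0(1)[of z] z assms beta0 by auto
    then have "(beta0 - a) * (cos z - 2 / pi) \<ge> 0" using 1 by auto
    then show ?thesis using z by linarith
  next
    case 2 then show ?thesis by simp
  next
    case 3
    then obtain z where z: "beta0 < z" "z < a" "hq a - hq beta0 = (a - beta0) * (cos z - 2 / pi)"
      using hq_mvt by blast
    have "cos z < 2/pi" using cos_vs_beta0(2)[of z] z assms beta0 by auto
    then have "(a - beta0) * (cos z - 2 / pi) \<le> 0" using 3 by (auto simp: mult_nonneg_nonpos)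
    then show ?thesis using z by linarith
  qed
qed

lemma hq_ge: assumes "0 \<le> a" "a \<le> pi/2" shows "hq a \<ge> 0"
proof -
  have h0: "hq 0 = 0" and hp: "hq (pi/2) = 0" by (auto simp: hq_def)
  consider "a = 0" | "0 < a" "a \<le> beta0" | "beta0 < a" "a < pi/2" | "a = pi/2" using assms by linarith
  then show ?thesis
  proof cases
    case 2
    then obtain z where z: "0 < z" "z < a" "hq a - hq 0 = (a - 0) * (cos z - 2 / pi)"
      using hq_mvt by blast
    have "cos z > 2/pi" using cos_vs_beta0(1)[of z] z 2 beta0 by auto
    then show ?thesis using z h0 2 by auto
  next
    case 3
    then obtain z where z: "a < z" "z < pi/2" "hq (pi/2) - hq a = (pi/2 - a) * (cos z - 2 / pi)"
      using hq_mvt by blast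
    have "cos z < 2/pi" using cos_vs_beta0(2)[of z] z 3 beta0 by auto
    then have "(pi/2 - a) * (cos z - 2 / pi) \<le> 0" using 3 by (auto simp: mult_nonneg_nonpos)
    then show ?thesis using z hp by linarith
  next
    case 1 then show ?thesis using h0 by simp
  next
    case 4 then have "a = pi/2" by simp
    then show ?thesis by (simp only: hp order_refl)
  qed
qed

lemma frak_m_eq: "2 * frak_m = 4 * hq beta0"
proof -
  have "4 \<le> pi * pi" using mult_mono[of 2 pi 2 pi] pi_ge_two by simp
  then have "(2/pi)^2 \<le> 1" by (simp add: field_simps power2_eq_square)
  then have s: "sin beta0 = sqrt (1 - (2/pi)^2)" unfolding beta0_def
    using pi_gt3 by (intro sin_arccos) (auto simp: field_simps)
  have "sqrt (pi^2 - 4) = sqrt (pi^2 * (1 - (2/pi)^2))"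
    by (simp add: field_simps power2_eq_square)
  also have "\<dots> = pi * sqrt (1 - (2/pi)^2)" by (simp add: real_sqrt_mult)
  finally have "sqrt (pi^2 - 4) = pi * sin beta0" using s by simp
  then show ?thesis unfolding frak_m_def hq_def beta0_def[symmetric] by (simp add: field_simps)
qed

lemma frak_m_nonneg: "frak_m \<ge> 0"
  using frak_m_eq hq_ge[of beta0] beta0 by auto

definition gq :: "real \<Rightarrow> real" where "gq w = 2 * \<bar>cos (w/2)\<bar> - 4/pi"
definition Pf :: "real \<Rightarrow> real" where "Pf w = integral {0..w} gq"
definition Qf :: "real \<Rightarrow> real" where "Qf z = 4 * hq (z/2)"

lemma gq_cont: "continuous_on A gq"
  unfolding gq_def by (intro continuous_intros) auto

lemma gq_int: "gq integrable_on {a..b}"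
  by (intro integrable_continuous_real gq_cont)

lemma gq_per: "gq (w + 2*pi) = gq w"
proof -
  have "cos ((w + 2*pi)/2) = - cos (w/2)"
    by (simp add: add_divide_distrib cos_add)
  then show ?thesis unfolding gq_def by simp
qed

lemma Qf_deriv: "(Qf has_real_derivative (2 * cos (z/2) - 4/pi)) (at z)"
  unfolding Qf_def hq_def by (auto intro!: derivative_eq_intros simp: field_simps)

lemma Qf0: "Qf 0 = 0" and Qfpi: "Qf pi = 0"
  by (auto simp: Qf_def hq_def)

lemma Qf_bounds: assumes "0 \<le> z" "z \<le> pi" shows "0 \<le> Qf z" "Qf z \<le> 2 * frak_m"
  using hq_ge[of "z/2"] hq_le[of "z/2"] assms frak_m_eq by (auto simp: Qf_def)

lemma Pf_first: assumes "0 \<le> w" "w \<le> pi" shows "(gq has_integral Qf w) {0..w}"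
proof -
  have "(Qf has_vector_derivative gq u) (at u within {0..w})" if u: "u \<in> {0..w}" for u
  proof -
    have "cos (u/2) \<ge> 0" using u assms by (intro cos_ge_zero) auto
    then have "2 * cos (u/2) - 4/pi = gq u" by (simp add: gq_def)
    then show ?thesis using Qf_deriv[of u]
      by (simp add: has_real_derivative_iff_has_vector_derivative has_vector_derivative_at_within)
  qed
  from fundamental_theorem_of_calculus[OF assms(1) this] show ?thesis by (simp add: Qf0)
qed

lemma Pf_second: assumes "pi \<le> w" "w \<le> 2*pi" shows "(gq has_integral (- Qf (2*pi - w))) {pi..w}"
proof -
  have "((\<lambda>u. - Qf (2*pi - u)) has_vector_derivative gq u) (at u within {pi..w})" if u: "u \<in> {pi..w}" for u
  proof -
    have d: "((\<lambda>u. - Qf (2*pi - u)) has_real_derivative (- ((2 * cos ((2*pi-u)/2) - 4/pi) * (-1)))) (at u)"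
      by (rule derivative_eq_intros DERIV_chain2[OF Qf_deriv] | simp)+
    have c: "cos ((2*pi-u)/2) = - cos (u/2)"
    proof -
      have e: "(2*pi-u)/2 = pi - u/2" by (simp add: field_simps)
      have "cos (pi - u/2) = - cos (u/2)" using cos_diff[of pi "u/2"] by simp
      then show ?thesis by (subst e)
    qed
    have "0 \<le> cos (pi - u/2)" using u assms by (intro cos_ge_zero) auto
    moreover have "cos (pi - u/2) = - cos (u/2)" using cos_diff[of pi "u/2"] by simp
    ultimately have "cos (u/2) \<le> 0" by simp
    then have "(- ((2 * cos ((2*pi-u)/2) - 4/pi) * (-1))) = gq u" using c by (simp add: gq_def)
    then show ?thesis using d
      by (simp add: has_real_derivative_iff_has_vector_derivative has_vector_derivative_at_within)
  qed
  from fundamental_theorem_of_calculus[OF assms(1) this] show ?thesis by (simp add: Qfpi)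
qed

lemma Pf_0_2pi: assumes "0 \<le> w" "w \<le> 2*pi" shows "-2*frak_m \<le> Pf w \<and> Pf w \<le> 2*frak_m"
proof (cases "w \<le> pi")
  case True
  have "Pf w = Qf w" by (simp add: Pf_def integral_unique[OF Pf_first[OF assms(1) True]])
  then show ?thesis using Qf_bounds[of w] assms True frak_m_nonneg by auto
next
  case False
  have "(gq has_integral (Qf pi + - Qf (2*pi - w))) {0..w}"
    using has_integral_combine[OF _ _ Pf_first[of pi] Pf_second[of w]] False assms by auto
  then have "Pf w = - Qf (2*pi - w)" unfolding Pf_def using Qfpi by (simp add: integral_unique)
  then show ?thesis using Qf_bounds[of "2*pi - w"] assms False frak_m_nonneg by auto
qed

lemma Pf_2pi: "Pf (2*pi) = 0"
proof -
  have "(gq has_integral (Qf pi + - Qf (2*pi - 2*pi))) {0..2*pi}"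
    using has_integral_combine[OF _ _ Pf_first[of pi] Pf_second[of "2*pi"]] by auto
  then show ?thesis unfolding Pf_def using Qfpi Qf0 by (simp add: integral_unique)
qed

lemma Pf_shift: assumes "0 \<le> w" shows "Pf (w + 2*pi) = Pf w"
proof -
  have "integral {0..w + 2*pi} gq = integral {0..2*pi} gq + integral {2*pi..w + 2*pi} gq"
    using Henstock_Kurzweil_Integration.integral_combine[where a=0 and c="2*pi" and b="w+2*pi" and f=gq] gq_int assms
    by auto
  moreover have "integral {2*pi..w + 2*pi} gq = integral {0..w} (gq \<circ> ((+) (2*pi)))"
    using integral_shift_Icc_real[of 0 w gq "2*pi"] by (simp add: add.commute)
  moreover have "gq \<circ> ((+) (2*pi)) = gq" by (auto simp: gq_per add.commute)
  ultimately show ?thesis using Pf_2pi unfolding Pf_def by simp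
qed

lemma Pf_bounds_aux: "\<forall>w. 0 \<le> w \<and> w \<le> 2*pi*(real n + 1) \<longrightarrow> -2*frak_m \<le> Pf w \<and> Pf w \<le> 2*frak_m"
proof (induction n)
  case 0 then show ?case using Pf_0_2pi by auto
next
  case (Suc n)
  show ?case
  proof (intro allI impI)
    fix w assume w: "0 \<le> w \<and> w \<le> 2*pi*(real (Suc n) + 1)"
    show "-2*frak_m \<le> Pf w \<and> Pf w \<le> 2*frak_m"
    proof (cases "w \<le> 2*pi")
      case True then show ?thesis using Pf_0_2pi w by auto
    next
      case False
      then have "Pf w = Pf (w - 2*pi)" using Pf_shift[of "w - 2*pi"] by simp
      moreover have "0 \<le> w - 2*pi \<and> w - 2*pi \<le> 2*pi*(real n + 1)" using w False
        by (auto simp: algebra_simps)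
      ultimately show ?thesis using Suc.IH by auto
    qed
  qed
qed

lemma Pf_bounds: assumes "0 \<le> w" shows "-2*frak_m \<le> Pf w" "Pf w \<le> 2*frak_m"
proof -
  obtain n :: nat where "w / (2*pi) \<le> real n" using real_arch_simple by blast
  then have "w \<le> 2*pi*real n" by (simp add: divide_le_eq mult.commute)
  then have "w \<le> 2*pi*(real n + 1)" by (simp add: algebra_simps) (use pi_gt_zero in linarith)
  then show "-2*frak_m \<le> Pf w" "Pf w \<le> 2*frak_m" using Pf_bounds_aux[of n] assms by auto
qed

lemma Pf_deriv: assumes "0 < w" shows "(Pf has_real_derivative gq w) (at w)"
proof -
  have "(Pf has_real_derivative gq w) (at w within {0..w+1})"
    unfolding Pf_def using assms by (intro integral_has_real_derivative gq_cont) auto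
  moreover have "w \<in> interior {0..w+1}" using assms by auto
  then have eq: "at w within {0..w+1} = at w" by (rule at_within_interior)
  ultimately show ?thesis by (simp only: eq)
qed


lemma lnln_integral:
  fixes x y :: real
  assumes "1 < y" "y \<le> x"
  shows "((\<lambda>t. 1 / (t * ln t)) has_integral (ln (ln x) - ln (ln y))) {y..x}"
proof -
  have "((\<lambda>t. ln (ln t)) has_vector_derivative (1 / (t * ln t))) (at t within {y..x})" if t: "t \<in> {y..x}" for t :: real
  proof -
    have "((\<lambda>t. ln (ln t)) has_real_derivative (1 / ln t) * (1 / t)) (at t)"
      using t assms by (auto intro!: derivative_eq_intros)
    moreover have "(1 / ln t) * (1 / t) = 1 / (t * ln t)" by simp
    ultimately show ?thesis
      by (metis has_real_derivative_iff_has_vector_derivative has_vector_derivative_at_within)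
  qed
  from fundamental_theorem_of_calculus[OF assms(2) this] show ?thesis by simp
qed

lemma main_int:
  assumes v: "0 < v" and y: "1 < y" "y \<le> x"
  shows "(\<lambda>t. 2 * \<bar>cos (v * ln t / 2)\<bar> / (t * ln t)) integrable_on {y..x}"
    and "integral {y..x} (\<lambda>t. 2 * \<bar>cos (v * ln t / 2)\<bar> / (t * ln t))
         \<le> 4/pi * (ln (ln x) - ln (ln y)) + 4 * frak_m / (v * ln y)"
proof -
  define f1 where "f1 = (\<lambda>t::real. 4/pi * (1 / (t * ln t)))"
  define f2 where "f2 = (\<lambda>t::real. gq (v * ln t) / (t * ln t))"
  define A where "A = (\<lambda>t::real. Pf (v * ln t) - 2 * frak_m)"
  define Phi where "Phi = (\<lambda>t::real. A t / (v * ln t))"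
  define psi where "psi = (\<lambda>t::real. f2 t - A t / (t * v * (ln t)^2))"
  have eqf: "2 * \<bar>cos (v * ln t / 2)\<bar> / (t * ln t) = f1 t + f2 t" for t
    by (simp add: f1_def f2_def gq_def add_divide_distrib diff_divide_distrib)
  have i1: "(f1 has_integral (4/pi * (ln (ln x) - ln (ln y)))) {y..x}"
    unfolding f1_def using lnln_integral[OF y] by (rule has_integral_mult_right)
  have c2: "continuous_on {y..x} f2"
    unfolding f2_def using y
    by (intro continuous_intros continuous_on_compose2[OF gq_cont]) auto
  have i2: "f2 integrable_on {y..x}" using c2 by (rule integrable_continuous_real)
  have dPhi: "(Phi has_vector_derivative psi t) (at t within {y..x})" if t: "t \<in> {y..x}" for t
  proof -
    have t1: "1 < t" using t y by auto
    have vl: "0 < v * ln t" using t1 v by auto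
    have d1: "((\<lambda>t. v * ln t) has_real_derivative v * (1/t)) (at t)"
      using t1 by (auto intro!: derivative_eq_intros)
    have dP: "((\<lambda>t. Pf (v * ln t)) has_real_derivative gq (v * ln t) * (v * (1 / t))) (at t)"
      using DERIV_chain2[OF Pf_deriv[OF vl] d1] .
    have "(Phi has_real_derivative
        ((gq (v * ln t) * (v * (1 / t))) * (v * ln t) - A t * (v * (1/t))) / (v * ln t)^2) (at t)"
      unfolding Phi_def A_def using t1 vl
      by (auto intro!: derivative_eq_intros dP simp: power2_eq_square)
    moreover have "((gq (v * ln t) * (v * (1 / t))) * (v * ln t) - A t * (v * (1/t))) / (v * ln t)^2 = psi t"
      unfolding psi_def f2_def using t1 v by (simp add: field_simps power2_eq_square)
    ultimately show ?thesis
      by (simp add: has_real_derivative_iff_has_vector_derivative has_vector_derivative_at_within)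
  qed
  have ipsi: "(psi has_integral (Phi x - Phi y)) {y..x}"
    by (rule fundamental_theorem_of_calculus[OF y(2) dPhi])
  have le: "f2 t \<le> psi t" if t: "t \<in> {y..x}" for t
  proof -
    have t1: "1 < t" using t y by auto
    have "A t \<le> 0" unfolding A_def using Pf_bounds(2)[of "v * ln t"] v t1 by auto
    moreover have "0 < t * v * (ln t)^2" using t1 v by auto
    ultimately have "A t / (t * v * (ln t)^2) \<le> 0" by (simp add: divide_nonpos_pos)
    then show ?thesis unfolding psi_def by simp
  qed
  have "integral {y..x} f2 \<le> Phi x - Phi y"
    using has_integral_le[OF integrable_integral[OF i2] ipsi le] by simp
  moreover have "Phi x \<le> 0"
  proof -
    have "A x \<le> 0" unfolding A_def using Pf_bounds(2)[of "v * ln x"] v y by auto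
    moreover have "0 < v * ln x" using v y by auto
    ultimately show ?thesis unfolding Phi_def by (simp add: divide_nonpos_pos)
  qed
  moreover have "- Phi y \<le> 4 * frak_m / (v * ln y)"
  proof -
    have "- A y \<le> 4 * frak_m" unfolding A_def using Pf_bounds(1)[of "v * ln y"] v y by auto
    moreover have "0 < v * ln y" using v y by auto
    ultimately show ?thesis unfolding Phi_def using divide_right_mono[of "- A y" "4*frak_m" "v * ln y"] by simp
  qed
  ultimately have I2: "integral {y..x} f2 \<le> 4 * frak_m / (v * ln y)" by linarith
  have "((\<lambda>t. f1 t + f2 t) has_integral (4/pi * (ln (ln x) - ln (ln y)) + integral {y..x} f2)) {y..x}"
    using i1 integrable_integral[OF i2] by (rule has_integral_add)
  then have H: "((\<lambda>t. 2 * \<bar>cos (v * ln t / 2)\<bar> / (t * ln t)) has_integral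
      (4/pi * (ln (ln x) - ln (ln y)) + integral {y..x} f2)) {y..x}"
    by (simp add: eqf)
  then show "(\<lambda>t. 2 * \<bar>cos (v * ln t / 2)\<bar> / (t * ln t)) integrable_on {y..x}" by blast
  show "integral {y..x} (\<lambda>t. 2 * \<bar>cos (v * ln t / 2)\<bar> / (t * ln t))
         \<le> 4/pi * (ln (ln x) - ln (ln y)) + 4 * frak_m / (v * ln y)"
    using integral_unique[OF H] I2 by simp
qed


definition Ff :: "real \<Rightarrow> real \<Rightarrow> real" where
  "Ff v t = 2 * \<bar>cos (v * ln t / 2)\<bar> / t"

definition Fd :: "real \<Rightarrow> real \<Rightarrow> real" where
  "Fd v t = - (sgn (cos (v * ln t / 2)) * v * sin (v * ln t / 2) + 2 * \<bar>cos (v * ln t / 2)\<bar>) / t^2"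

lemma DERIV_abs_nz:
  fixes f :: "real \<Rightarrow> real"
  assumes d: "(f has_real_derivative D) (at x)" and nz: "f x \<noteq> 0"
  shows "((\<lambda>x. \<bar>f x\<bar>) has_real_derivative sgn (f x) * D) (at x)"
proof -
  have cont: "isCont f x" using d by (rule DERIV_isCont)
  have ev: "\<forall>\<^sub>F y in nhds x. sgn (f x) * f y = \<bar>f y\<bar>"
  proof (cases "f x > 0")
    case True
    then have "\<forall>\<^sub>F y in nhds x. f y > 0"
      using cont by (metis isCont_def order_tendstoD(1) tendsto_at_iff_tendsto_nhds)
    then show ?thesis by eventually_elim (use True in auto)
  next
    case False
    then have "f x < 0" using nz by auto
    then have "\<forall>\<^sub>F y in nhds x. f y < 0"
      using cont by (metis isCont_def order_tendstoD(2) tendsto_at_iff_tendsto_nhds)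
    then show ?thesis by eventually_elim (use \<open>f x < 0\<close> in auto)
  qed
  have "((\<lambda>y. sgn (f x) * f y) has_real_derivative sgn (f x) * D) (at x)"
    using d by (rule DERIV_cmult)
  then show ?thesis using DERIV_cong_ev[OF refl ev refl] by simp
qed

lemma Ff_deriv:
  assumes t: "0 < t" and c: "cos (v * ln t / 2) \<noteq> 0"
  shows "(Ff v has_real_derivative Fd v t) (at t)"
proof -
  have dc: "((\<lambda>t. cos (v * ln t / 2)) has_real_derivative (- sin (v * ln t / 2) * (v * (1/t) / 2))) (at t)"
    using t by (auto intro!: derivative_eq_intros)
  have da: "((\<lambda>t. \<bar>cos (v * ln t / 2)\<bar>) has_real_derivative
       sgn (cos (v * ln t / 2)) * (- sin (v * ln t / 2) * (v * (1/t) / 2))) (at t)"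
    by (rule DERIV_abs_nz[OF dc c])
  have "((\<lambda>t. 2 * \<bar>cos (v * ln t / 2)\<bar> / t) has_real_derivative
      ((2 * (sgn (cos (v * ln t / 2)) * (- sin (v * ln t / 2) * (v * (1/t) / 2)))) * t
        - 2 * \<bar>cos (v * ln t / 2)\<bar> * 1) / (t * t)) (at t)"
    using t by (intro DERIV_divide DERIV_cmult da DERIV_ident) auto
  moreover have "((2 * (sgn (cos (v * ln t / 2)) * (- sin (v * ln t / 2) * (v * (1/t) / 2)))) * t
        - 2 * \<bar>cos (v * ln t / 2)\<bar> * 1) / (t * t) = Fd v t"
    unfolding Fd_def using t by (simp add: field_simps power2_eq_square)
  ultimately show ?thesis by (simp add: Ff_def[abs_def])
qed

lemma Fd_bound:
  assumes "0 < t" "\<bar>v\<bar> \<le> 1"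
  shows "\<bar>Fd v t\<bar> \<le> sqrt 5 / t^2"
proof -
  define c where "c = cos (v * ln t / 2)"
  define s where "s = sin (v * ln t / 2)"
  have cs: "s^2 + c^2 = 1" unfolding c_def s_def by simp
  have "\<bar>sgn c * v * s + 2 * \<bar>c\<bar>\<bar> \<le> \<bar>v * s + 2 * c\<bar> \<or> c = 0"
    by (cases "c > 0"; cases "c = 0") (auto simp: sgn_if abs_minus_commute)
  moreover have "(v * s + 2 * c)^2 \<le> 5"
  proof -
    have "(v * s + 2 * c)^2 + (2 * s - v * c)^2 = (v^2 + 4) * (s^2 + c^2)"
      by (simp add: power2_eq_square algebra_simps)
    then have "(v * s + 2 * c)^2 + (2 * s - v * c)^2 = v^2 + 4" using cs by simp
    moreover have "v^2 \<le> 1" using assms(2) by (metis abs_le_square_iff abs_one one_power2)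
    moreover have "0 \<le> (2 * s - v * c)^2" by simp
    ultimately show ?thesis by linarith
  qed
  then have "\<bar>v * s + 2 * c\<bar> \<le> sqrt 5"
    using real_le_rsqrt by (metis real_sqrt_abs real_sqrt_le_mono)
  ultimately have "\<bar>sgn c * v * s + 2 * \<bar>c\<bar>\<bar> \<le> sqrt 5" by auto
  then show ?thesis unfolding Fd_def c_def[symmetric] s_def[symmetric] using assms(1)
    by (simp add: abs_div abs_minus divide_right_mono)
qed

lemma Ff_bound: "0 < t \<Longrightarrow> \<bar>Ff v t\<bar> \<le> 2 / t"
  unfolding Ff_def by (simp add: abs_div divide_right_mono)

lemma Ff_cont: "0 < y \<Longrightarrow> continuous_on {y..x} (Ff v)"
  unfolding Ff_def by (intro continuous_intros) auto

lemma kinks_finite: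
  fixes v y x :: real
  assumes v: "0 < v" and y: "0 < y"
  shows "finite {t \<in> {y..x}. cos (v * ln t / 2) = 0}"
proof -
  let ?S = "(\<lambda>i::int. exp (of_int i * pi / v)) ` {\<lfloor>v * ln y / pi\<rfloor>..\<lceil>v * ln x / pi\<rceil>}"
  have "{t \<in> {y..x}. cos (v * ln t / 2) = 0} \<subseteq> ?S"
  proof
    fix t assume t: "t \<in> {t \<in> {y..x}. cos (v * ln t / 2) = 0}"
    then obtain i where i: "odd i" "v * ln t / 2 = of_int i * (pi/2)"
      using cos_zero_iff_int by blast
    have ti: "v * ln t / pi = of_int i" using i(2) by (simp add: field_simps)
    have tp: "0 < t" using t y by auto
    have "t = exp (of_int i * pi / v)"
    proof -
      have "ln t = of_int i * pi / v" using ti v by (simp add: field_simps)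
      then show ?thesis using tp by (metis exp_ln)
    qed
    moreover have "v * ln y / pi \<le> v * ln t / pi" using t y v
      by (intro divide_right_mono mult_left_mono) auto
    moreover have "v * ln t / pi \<le> v * ln x / pi" using t y v
      by (intro divide_right_mono mult_left_mono) auto
    ultimately show "t \<in> ?S" using ti
      by (intro image_eqI[of _ _ i]) (auto simp: floor_le_iff le_ceiling_iff)
  qed
  moreover have "finite ?S" by simp
  ultimately show ?thesis by (rule finite_subset)
qed


lemma finite_primes_le: "finite {p::nat. P p \<and> real p \<le> t}"
proof -
  have "{p::nat. P p \<and> real p \<le> t} \<subseteq> {..nat \<lfloor>t\<rfloor>}"
    by auto (meson le_nat_floor of_nat_le_iff order_trans)
  then show ?thesis by (rule finite_subset) auto
qed

lemma finite_PS: "finite {p::nat. prime p \<and> y < real p \<and> real p \<le> t}"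
  using finite_primes_le[of "\<lambda>p. prime p \<and> y < real p" t] by (simp add: conj_assoc)

lemma prime_pi_diff:
  assumes "y \<le> t"
  shows "prime_pi t - prime_pi y = real (card {p::nat. prime p \<and> y < real p \<and> real p \<le> t})"
proof -
  have "{p::nat. prime p \<and> real p \<le> t} = {p. prime p \<and> real p \<le> y} \<union> {p. prime p \<and> y < real p \<and> real p \<le> t}"
    using assms by auto
  moreover have "{p::nat. prime p \<and> real p \<le> y} \<inter> {p. prime p \<and> y < real p \<and> real p \<le> t} = {}" by auto
  ultimately have "card {p::nat. prime p \<and> real p \<le> t} = card {p::nat. prime p \<and> real p \<le> y} + card {p. prime p \<and> y < real p \<and> real p \<le> t}"
    using finite_primes_le[of prime y] finite_PS[of y t] by (simp add: card_Un_disjoint)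
  then show ?thesis unfolding prime_pi_def by simp
qed

lemma abel_primes:
  fixes F Fd :: "real \<Rightarrow> real" and y x :: real
  assumes yx: "2 \<le> y" "y \<le> x" and K: "finite K" and cF: "continuous_on {y..x} F"
    and dF: "\<And>t. t \<in> {y<..<x} - K \<Longrightarrow> (F has_real_derivative Fd t) (at t)"
  shows "((\<lambda>t. (prime_pi t - prime_pi y) * Fd t) has_integral
          (real (card {p::nat. prime p \<and> y < real p \<and> real p \<le> x}) * F x
           - (\<Sum>p\<in>{p::nat. prime p \<and> y < real p \<and> real p \<le> x}. F (real p)))) {y..x}"
proof -
  define PS where "PS = {p::nat. prime p \<and> y < real p \<and> real p \<le> x}"
  have fPS: "finite PS" unfolding PS_def by (rule finite_PS)
  have one: "((\<lambda>t. if t \<in> {real p..x} then Fd t else 0) has_integral (F x - F (real p))) {y..x}"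
    if p: "p \<in> PS" for p
  proof -
    have px: "real p \<le> x" "y < real p" using p unfolding PS_def by auto
    have "(Fd has_integral (F x - F (real p))) {real p..x}"
    proof (rule fundamental_theorem_of_calculus_interior_strong[OF K px(1)])
      fix t assume "t \<in> {real p<..<x} - K"
      then have "t \<in> {y<..<x} - K" using px by auto
      then show "(F has_vector_derivative Fd t) (at t)"
        using dF by (simp add: has_real_derivative_iff_has_vector_derivative)
    next
      show "continuous_on {real p..x} F" using cF by (rule continuous_on_subset) (use px in auto)
    qed
    then show ?thesis
      using has_integral_restrict_closed_subinterval[of Fd "F x - F (real p)" "real p" x y x] px
      by auto
  qed
  have S: "((\<lambda>t. \<Sum>p\<in>PS. if t \<in> {real p..x} then Fd t else 0) has_integral
      (\<Sum>p\<in>PS. F x - F (real p))) {y..x}"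
    using fPS one by (intro has_integral_sum) auto
  have eq: "(\<Sum>p\<in>PS. if t \<in> {real p..x} then Fd t else 0) = (prime_pi t - prime_pi y) * Fd t"
    if t: "t \<in> {y..x}" for t
  proof -
    have "(\<Sum>p\<in>PS. if t \<in> {real p..x} then Fd t else 0) = (\<Sum>p\<in>{p\<in>PS. real p \<le> t}. Fd t)"
      using fPS t by (intro sum.mono_neutral_cong_right) (auto simp: PS_def)
    also have "\<dots> = real (card {p\<in>PS. real p \<le> t}) * Fd t" by simp
    also have "{p\<in>PS. real p \<le> t} = {p::nat. prime p \<and> y < real p \<and> real p \<le> t}"
      using t by (auto simp: PS_def)
    finally show ?thesis using prime_pi_diff[of y t] t by simp
  qed
  have "(\<Sum>p\<in>PS. F x - F (real p)) = real (card PS) * F x - (\<Sum>p\<in>PS. F (real p))"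
    by (simp add: sum_subtractf)
  then show ?thesis using has_integral_eq[OF eq S] unfolding PS_def by simp
qed


lemma li_side:
  fixes F Fd :: "real \<Rightarrow> real" and y x :: real
  assumes yx: "2 \<le> y" "y \<le> x" and K: "finite K" and cF: "continuous_on {y..x} F"
    and dF: "\<And>t. t \<in> {y<..<x} - K \<Longrightarrow> (F has_real_derivative Fd t) (at t)"
  shows "((\<lambda>t. integral {y..t} (\<lambda>u. 1 / ln u) * Fd t) has_integral
          (integral {y..x} (\<lambda>u. 1 / ln u) * F x - integral {y..x} (\<lambda>t. F t / ln t))) {y..x}"
proof -
  define L where "L = (\<lambda>t. integral {y..t} (\<lambda>u::real. 1 / ln u))"
  have cl: "continuous_on {y..x} (\<lambda>u::real. 1 / ln u)" using yx by (intro inv_ln_cont1) auto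
  have cL: "continuous_on {y..x} L" unfolding L_def
    by (rule indefinite_integral_continuous_1[OF integrable_continuous_real[OF cl]])
  have dL: "(L has_real_derivative 1 / ln t) (at t)" if t: "t \<in> {y<..<x}" for t
  proof -
    have "(L has_real_derivative 1 / ln t) (at t within {y..x})"
      unfolding L_def using t by (intro integral_has_real_derivative cl) auto
    moreover have "at t within {y..x} = at t" using t by (intro at_within_interior) auto
    ultimately show ?thesis by simp
  qed
  have cFl: "continuous_on {y..x} (\<lambda>t. F t / ln t)"
  proof -
    have "continuous_on {y..x} (\<lambda>t. F t * (1 / ln t))" by (intro continuous_intros cF cl)
    then show ?thesis by simp
  qed
  have "((\<lambda>t. (1 / ln t) * F t + L t * Fd t) has_integral (L x * F x - L y * F y)) {y..x}"
  proof (rule fundamental_theorem_of_calculus_interior_strong[OF K yx(2)])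
    fix t assume t: "t \<in> {y<..<x} - K"
    have "((\<lambda>t. L t * F t) has_real_derivative (1 / ln t) * F t + L t * Fd t) (at t)"
      using DERIV_mult[OF dL dF[OF t]] t by (simp add: mult.commute)
    then show "((\<lambda>t. L t * F t) has_vector_derivative (1 / ln t) * F t + L t * Fd t) (at t)"
      by (simp add: has_real_derivative_iff_has_vector_derivative)
  next
    show "continuous_on {y..x} (\<lambda>t. L t * F t)" by (intro continuous_intros cL cF)
  qed
  moreover have "L y = 0" unfolding L_def by simp
  ultimately have I: "((\<lambda>t. F t / ln t + L t * Fd t) has_integral (L x * F x)) {y..x}" by simp
  have "((\<lambda>t. (F t / ln t + L t * Fd t) - F t / ln t) has_integral
         (L x * F x - integral {y..x} (\<lambda>t. F t / ln t))) {y..x}"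
    by (intro has_integral_diff I integrable_integral integrable_continuous_real cFl)
  then show ?thesis unfolding L_def by simp
qed

lemma inv_lnpow_integral:
  fixes y x :: real and k :: nat
  assumes y: "1 < y" "y \<le> x"
  shows "((\<lambda>t. 1 / (t * (ln t)^(k+2))) has_integral
     (1 / (real (k+1) * (ln y)^(k+1)) - 1 / (real (k+1) * (ln x)^(k+1)))) {y..x}"
proof -
  have "((\<lambda>t. - 1 / (real (k+1) * (ln t)^(k+1))) has_vector_derivative (1 / (t * (ln t)^(k+2)))) (at t within {y..x})"
    if t: "t \<in> {y..x}" for t
  proof -
    have lt: "0 < ln t" using t y by auto
    have tp: "0 < t" using t y by auto
    have d0: "(ln has_real_derivative 1/t) (at t)" using tp by (auto intro!: derivative_eq_intros)
    have d1: "((\<lambda>t. ln t ^ (k+1)) has_real_derivative real (k+1) * ln t ^ k * (1/t)) (at t)"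
      using DERIV_power[OF d0, of "k+1"] by simp
    have d2: "((\<lambda>t. real (k+1) * ln t ^ (k+1)) has_real_derivative real (k+1) * (real (k+1) * ln t ^ k * (1/t))) (at t)"
      by (rule DERIV_cmult[OF d1])
    have d3: "((\<lambda>t. - 1 / (real (k+1) * (ln t)^(k+1))) has_real_derivative
       ((0 * (real (k+1) * ln t ^ (k+1)) - (- 1) * (real (k+1) * (real (k+1) * ln t ^ k * (1/t)))) / ((real (k+1) * ln t ^ (k+1)) * (real (k+1) * ln t ^ (k+1))))) (at t)"
      using lt by (intro DERIV_divide[OF DERIV_const d2]) auto
    moreover have "((0 * (real (k+1) * ln t ^ (k+1)) - (- 1) * (real (k+1) * (real (k+1) * ln t ^ k * (1/t)))) / ((real (k+1) * ln t ^ (k+1)) * (real (k+1) * ln t ^ (k+1))))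
        = 1 / (t * (ln t)^(k+2))"
    proof -
      define c where "c = real (k+1)"
      define L where "L = ln t"
      have c0: "c > 0" and L0: "L > 0" using lt by (auto simp: c_def L_def)
      have "((0 * (c * L ^ (k+1)) - (- 1) * (c * (c * L ^ k * (1/t)))) / ((c * L ^ (k+1)) * (c * L ^ (k+1))))
          = (c * c) * L ^ k / ((c * c) * (t * (L ^ k * L ^ (k+2))))"
        by (simp add: power_add power2_eq_square algebra_simps)
      also have "\<dots> = 1 / (t * L^(k+2))" using c0 L0 tp by simp
      finally show ?thesis unfolding c_def L_def .
    qed
    ultimately show ?thesis
      by (metis has_real_derivative_iff_has_vector_derivative has_vector_derivative_at_within)
  qed
  from fundamental_theorem_of_calculus[OF y(2) this] show ?thesis by simp
qed


lemma RF_bound: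
  fixes Rt Ft t a :: real and r :: nat
  assumes t: "2 \<le> t" and R: "\<bar>Rt\<bar> \<le> a * t / (ln t)^r" and F: "\<bar>Ft\<bar> \<le> 2 / t"
  shows "\<bar>Rt * Ft\<bar> \<le> 2 * a / (ln t)^r"
proof -
  have nn: "0 \<le> a * t / (ln t)^r" using R abs_ge_zero[of Rt] by linarith
  have "\<bar>Rt * Ft\<bar> = \<bar>Rt\<bar> * \<bar>Ft\<bar>" by (simp add: abs_mult)
  also have "\<dots> \<le> (a * t / (ln t)^r) * (2 / t)"
    using nn by (intro mult_mono R F) auto
  also have "\<dots> = 2 * a / (ln t)^r" using t by (simp add: field_simps)
  finally show ?thesis .
qed

lemma abel_bound:
  fixes v y x a :: real and r :: nat
  assumes v: "0 < v" "v \<le> 1" and yx: "2 \<le> y" "y \<le> x" and a: "a > 0" and r: "r \<ge> 2"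
    and PNT: "\<forall>t \<ge> y. \<bar>prime_pi t - li t\<bar> \<le> a * t / (ln t)^r"
  shows "(\<Sum>p\<in>{p::nat. prime p \<and> y < real p \<and> real p \<le> x}. Ff v (real p))
     \<le> integral {y..x} (\<lambda>t. Ff v t / ln t) + 2*a/(ln x)^r + 2*a/(ln y)^r
        + sqrt 5 * a / (real (r-1) * (ln y)^(r-1))"
proof -
  define K where "K = {t \<in> {y..x}. cos (v * ln t / 2) = 0}"
  have K: "finite K" unfolding K_def using v yx by (intro kinks_finite) auto
  have cF: "continuous_on {y..x} (Ff v)" using yx by (intro Ff_cont) auto
  have dF: "(Ff v has_real_derivative Fd v t) (at t)" if t: "t \<in> {y<..<x} - K" for t
    using t yx by (intro Ff_deriv) (auto simp: K_def)
  define PS where "PS = {p::nat. prime p \<and> y < real p \<and> real p \<le> x}"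
  define N where "N = real (card PS)"
  define S where "S = (\<Sum>p\<in>PS. Ff v (real p))"
  define Lx where "Lx = integral {y..x} (\<lambda>u::real. 1 / ln u)"
  define I where "I = integral {y..x} (\<lambda>t. Ff v t / ln t)"
  define R where "R = (\<lambda>t. prime_pi t - li t)"
  have A: "((\<lambda>t. (prime_pi t - prime_pi y) * Fd v t) has_integral (N * Ff v x - S)) {y..x}"
    unfolding N_def S_def PS_def by (rule abel_primes[OF yx K cF dF])
  have B: "((\<lambda>t. integral {y..t} (\<lambda>u. 1 / ln u) * Fd v t) has_integral (Lx * Ff v x - I)) {y..x}"
    unfolding Lx_def I_def by (rule li_side[OF yx K cF dF])
  have C: "(Fd v has_integral (Ff v x - Ff v y)) {y..x}"
    using fundamental_theorem_of_calculus_interior_strong[OF K yx(2) _ cF] dF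
    by (simp add: has_real_derivative_iff_has_vector_derivative)
  have D: "((\<lambda>t. (prime_pi t - prime_pi y) * Fd v t - integral {y..t} (\<lambda>u. 1 / ln u) * Fd v t + R y * Fd v t)
     has_integral ((N * Ff v x - S) - (Lx * Ff v x - I) + R y * (Ff v x - Ff v y))) {y..x}"
    by (intro has_integral_add has_integral_diff A B has_integral_mult_right C)
  have eqR: "(prime_pi t - prime_pi y) * Fd v t - integral {y..t} (\<lambda>u. 1 / ln u) * Fd v t + R y * Fd v t
      = R t * Fd v t" if t: "t \<in> {y..x}" for t
  proof -
    have "li t - li y = integral {y..t} (\<lambda>u. 1 / ln u)" using li_diff[of y t] t yx by auto
    then show ?thesis unfolding R_def by (simp add: algebra_simps)
  qed
  define J where "J = (N * Ff v x - S) - (Lx * Ff v x - I) + R y * (Ff v x - Ff v y)"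
  have RJ: "((\<lambda>t. R t * Fd v t) has_integral J) {y..x}"
    unfolding J_def using has_integral_eq[OF eqR D] by simp
  have NL: "N - Lx = R x - R y"
    unfolding N_def Lx_def R_def PS_def using prime_pi_diff[of y x] li_diff[of y x] yx by simp
  have SJ: "S = I + R x * Ff v x - R y * Ff v y - J"
  proof -
    have "J = (N - Lx) * Ff v x - S + I + R y * Ff v x - R y * Ff v y"
      unfolding J_def by (simp add: algebra_simps)
    then show ?thesis using NL by (simp add: algebra_simps)
  qed
  obtain k where k: "r = k + 2" using r by (metis add.commute le_Suc_ex)
  have ly: "1 < y" using yx by auto
  have G: "((\<lambda>t. sqrt 5 * a * (1 / (t * (ln t)^(k+2)))) has_integral
     (sqrt 5 * a * (1 / (real (k+1) * (ln y)^(k+1)) - 1 / (real (k+1) * (ln x)^(k+1))))) {y..x}"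
    using inv_lnpow_integral[OF ly yx(2), of k] by (rule has_integral_mult_right)
  have pw: "\<bar>R t * Fd v t\<bar> \<le> sqrt 5 * a * (1 / (t * (ln t)^(k+2)))" if t: "t \<in> {y..x}" for t
  proof -
    have t0: "0 < t" "2 \<le> t" using t yx by auto
    have "\<bar>R t * Fd v t\<bar> = \<bar>R t\<bar> * \<bar>Fd v t\<bar>" by (simp add: abs_mult)
    also have "\<dots> \<le> (a * t / (ln t)^r) * (sqrt 5 / t^2)"
      using PNT t0 t Fd_bound[of t v] v unfolding R_def by (intro mult_mono) auto
    also have "\<dots> = sqrt 5 * a * (1 / (t * (ln t)^(k+2)))" using t0 k
      by (simp add: field_simps power2_eq_square)
    finally show ?thesis .
  qed
  have "norm J \<le> sqrt 5 * a * (1 / (real (k+1) * (ln y)^(k+1)) - 1 / (real (k+1) * (ln x)^(k+1)))"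
    using integral_norm_bound_integral[OF has_integral_integrable[OF RJ] has_integral_integrable[OF G]] pw
      integral_unique[OF RJ] integral_unique[OF G] by auto
  also have "\<dots> \<le> sqrt 5 * a * (1 / (real (k+1) * (ln y)^(k+1)))"
  proof -
    have "0 \<le> 1 / (real (k+1) * (ln x)^(k+1))" using yx by auto
    then show ?thesis using a by (intro mult_left_mono) auto
  qed
  also have "\<dots> = sqrt 5 * a / (real (r-1) * (ln y)^(r-1))" using k by simp
  finally have Jb: "\<bar>J\<bar> \<le> sqrt 5 * a / (real (r-1) * (ln y)^(r-1))" by simp
  have bx: "\<bar>R x * Ff v x\<bar> \<le> 2 * a / (ln x)^r"
    using yx PNT Ff_bound[of x v] unfolding R_def by (intro RF_bound) auto
  have by': "\<bar>R y * Ff v y\<bar> \<le> 2 * a / (ln y)^r"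
    using yx PNT Ff_bound[of y v] unfolding R_def by (intro RF_bound) auto
  have "S \<le> I + \<bar>R x * Ff v x\<bar> + \<bar>R y * Ff v y\<bar> + \<bar>J\<bar>" using SJ by linarith
  then show ?thesis using bx by' Jb unfolding S_def PS_def I_def by linarith
qed


lemma tau_prime:
  assumes p: "prime p"
  shows "cmod (tau p v) = 2 * \<bar>cos (v * ln (real p) / 2)\<bar>"
proof -
  have d: "{d. d dvd p} = {1, p}" using p by (auto simp: prime_nat_iff)
  have p1: "p \<noteq> 1" using p by auto
  define th where "th = v * ln (real p)"
  have "tau p v = 1 + cis th" unfolding tau_def d th_def using p1 by simp
  then have "cmod (tau p v) = sqrt ((1 + cos th)^2 + (sin th)^2)"
    by (simp add: cmod_def cis.sel)
  also have "(1 + cos th)^2 + (sin th)^2 = (2 * \<bar>cos (th/2)\<bar>)^2"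
  proof -
    have "cos th = cos (2 * (th/2))" by simp
    also have "\<dots> = 2 * (cos (th/2))^2 - 1" by (rule cos_double_cos)
    finally have c: "cos th = 2 * (cos (th/2))^2 - 1" .
    have "(1 + cos th)^2 + (sin th)^2 = 2 + 2 * cos th"
      using sin_cos_squared_add[of th] by (simp add: power2_eq_square algebra_simps)
    also have "\<dots> = (2 * \<bar>cos (th/2)\<bar>)^2" using c by (simp add: power2_eq_square algebra_simps)
    finally show ?thesis .
  qed
  also have "sqrt ((2 * \<bar>cos (th/2)\<bar>)^2) = 2 * \<bar>cos (th/2)\<bar>" by (rule real_sqrt_unique) auto
  finally show ?thesis unfolding th_def .
qed

lemma tau_le: "prime p \<Longrightarrow> cmod (tau p v) / real p \<le> 2 / real p"
  using tau_prime[of p v] by (auto intro!: divide_right_mono)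

lemma zeta_summable: "r \<ge> 2 \<Longrightarrow> summable (\<lambda>n. 1 / real (Suc n) ^ r)"
proof -
  assume r: "r \<ge> 2"
  have "summable (\<lambda>n. inverse (real n ^ r))" using inverse_power_summable[OF r] by simp
  then have "summable (\<lambda>n. inverse (real (n + 1) ^ r))"
    by (rule summable_ignore_initial_segment)
  then show ?thesis by (simp add: field_simps)
qed

lemma zeta_ge: "r \<ge> 2 \<Longrightarrow> (\<Sum>n<m. 1 / real (Suc n) ^ r) \<le> zeta_nat r"
  unfolding zeta_nat_def by (intro sum_le_suminf zeta_summable) auto

lemma zeta_ge1: "r \<ge> 2 \<Longrightarrow> 1 \<le> zeta_nat r"
  using zeta_ge[of r 1] by simp

lemma zeta2_ge: "49/36 \<le> zeta_nat 2"
  using zeta_ge[of 2 3] by (simp add: numeral_eq_Suc)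

lemma core_slack:
  fixes L :: real and r :: nat
  assumes L: "1 \<le> L" and r: "r \<ge> 2"
  shows "sqrt 5 / (real (r-1) * L^(r-1)) < 4 * zeta_nat r / (2*pi)^r + 10 / L^r"
proof -
  have s5: "sqrt 5 < 2.237"
    by (rule real_less_lsqrt) (auto simp: power2_eq_square)
  have s5p: "0 < sqrt 5" by simp
  have pi1: "pi \<le> 3.1416" and pi2: "3.1415 \<le> pi" using pi_approx by auto
  have Lr: "L^r = L * L^(r-1)"
  proof -
    obtain j where "r = Suc j" using r by (cases r) auto
    then show ?thesis by simp
  qed
  have Lp: "0 < L^(r-1)" using L by simp
  have key: "sqrt 5 * L / real (r-1) < 4 * zeta_nat r * L^r / (2*pi)^r + 10"
  proof (cases "r = 2")
    case True
    define c where "c = zeta_nat 2 / pi^2"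
    have z: "49/36 \<le> zeta_nat 2" by (rule zeta2_ge)
    have pisq: "pi^2 \<le> 3.1416^2" using pi1 by (intro power_mono) auto
    have c0: "0 < c" unfolding c_def using z by auto
    have "49/36 / 3.1416^2 \<le> c" unfolding c_def
      using z pisq by (intro frac_le) auto
    moreover have "(1::real)/8 < 49/36 / 3.1416^2" by (simp add: power2_eq_square)
    ultimately have c1: "40 * c > 5" by linarith
    have "4 * c * (c * L^2 - sqrt 5 * L + 10) = (2 * c * L - sqrt 5)^2 + (40 * c - 5)"
      by (simp add: power2_eq_square algebra_simps)
    also have "\<dots> > 0" using c1 by (intro add_nonneg_pos) auto
    finally have "c * L^2 - sqrt 5 * L + 10 > 0" using c0 by (simp add: zero_less_mult_iff)
    moreover have "4 * zeta_nat r * L^r / (2*pi)^r = c * L^2"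
      unfolding c_def True by (simp add: power_mult_distrib field_simps)
    ultimately show ?thesis using True by simp
  next
    case False
    then have r3: "r \<ge> 3" using r by auto
    have "sqrt 5 * L / real (r-1) \<le> sqrt 5 * L / 2"
      using r3 L by (intro divide_left_mono) auto
    moreover have "sqrt 5 * L / 2 < 4 * zeta_nat r * L^r / (2*pi)^r + 10"
    proof (cases "L \<le> 2 * pi")
      case True
      have "sqrt 5 * L / 2 \<le> 2.237 * (2 * 3.1416) / 2"
        using s5 True pi1 L by (intro divide_right_mono mult_mono) auto
      also have "\<dots> < 10" by simp
      also have "10 \<le> 4 * zeta_nat r * L^r / (2*pi)^r + 10"
        using L zeta_ge1[OF r] by auto
      finally show ?thesis .
    next
      case False
      define z where "z = L / (2*pi)"
      have z1: "1 \<le> z" unfolding z_def using False by simp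
      have "z^3 \<le> z^r" using z1 r3 by (intro power_increasing) auto
      have zr: "4 * zeta_nat r * L^r / (2*pi)^r = 4 * zeta_nat r * z^r"
        unfolding z_def by (simp add: power_divide)
      have zz: "z^r \<le> zeta_nat r * z^r"
        using mult_right_mono[of 1 "zeta_nat r" "z^r"] zeta_ge1[OF r] z1 by simp
      have "4 * z^3 \<le> 4 * zeta_nat r * z^r"
        using \<open>z^3 \<le> z^r\<close> zz by simp
      show ?thesis
      proof (cases "L \<le> 8.9")
        case True
        have "sqrt 5 * L / 2 \<le> 2.237 * 8.9 / 2"
          using s5 True L by (intro divide_right_mono mult_mono) auto
        also have "\<dots> < 10" by simp
        also have "10 \<le> 4 * zeta_nat r * L^r / (2*pi)^r + 10"
          using L zeta_ge1[OF r] by auto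
        finally show ?thesis .
      next
        case False
        have pi3: "pi^3 \<le> 3.1416^3" using pi1 by (intro power_mono) auto
        have "4 * z^3 = L * (L^2 / (2 * pi^3))"
          unfolding z_def by (simp add: power_divide field_simps power2_eq_square power3_eq_cube)
        moreover have "L^2 / (2 * pi^3) \<ge> 8.9^2 / (2 * 3.1416^3)"
          using False pi3 by (intro frac_le power_mono) auto
        ultimately have "4 * z^3 \<ge> L * (8.9^2 / (2 * 3.1416^3))"
          using L by (metis mult_left_mono order_trans zero_le_one)
        moreover have "L * (8.9^2 / (2 * 3.1416^3)) > sqrt 5 * L / 2"
        proof -
          have "(2.237::real) / 2 < 8.9^2 / (2 * 3.1416^3)" by (simp add: power2_eq_square power3_eq_cube)
          moreover have "sqrt 5 / 2 < (2.237::real) / 2" using s5 by simp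
          ultimately have "sqrt 5 / 2 < 8.9^2 / (2 * 3.1416^3)" by (rule less_trans[rotated])
          then show ?thesis using L by (simp add: field_simps)
        qed
        ultimately show ?thesis using zr \<open>4 * z^3 \<le> 4 * zeta_nat r * z^r\<close> by linarith
      qed
    qed
    ultimately show ?thesis by (rule le_less_trans)
  qed
  have "sqrt 5 / (real (r-1) * L^(r-1)) = (sqrt 5 * L / real (r-1)) / L^r"
    using Lr L by (simp add: field_simps)
  also have "\<dots> < (4 * zeta_nat r * L^r / (2*pi)^r + 10) / L^r"
    using key L by (intro divide_strict_right_mono) auto
  also have "\<dots> = 4 * zeta_nat r / (2*pi)^r + 10 / L^r"
    using L by (simp add: field_simps)
  finally show ?thesis .
qed


lemma split_sum:
  fixes y x :: real and f :: "nat \<Rightarrow> real"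
  assumes "y \<le> x"
  shows "(\<Sum>p | prime p \<and> real p \<le> x. f p) = (\<Sum>p | prime p \<and> real p \<le> y. f p)
           + (\<Sum>p\<in>{p::nat. prime p \<and> y < real p \<and> real p \<le> x}. f p)"
proof -
  have "{p::nat. prime p \<and> real p \<le> x} = {p. prime p \<and> real p \<le> y} \<union> {p. prime p \<and> y < real p \<and> real p \<le> x}"
    using assms by auto
  moreover have "{p::nat. prime p \<and> real p \<le> y} \<inter> {p. prime p \<and> y < real p \<and> real p \<le> x} = {}" by auto
  ultimately show ?thesis
    using finite_primes_le[of prime y] finite_PS[of y x] by (simp add: sum.union_disjoint)
qed

lemma slack_full:
  fixes L Ly Lx a :: real and r :: nat
  assumes L: "1 \<le> L" "L \<le> Ly" "Ly \<le> Lx" and a: "a > 0" and r: "r \<ge> 2"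
  shows "2*a/Lx^r + 2*a/Ly^r + sqrt 5 * a / (real (r-1) * Ly^(r-1))
         < 4 * a * zeta_nat r / (2*pi)^r + 14 * a / L^r"
proof -
  have L0: "0 < L" using L by auto
  have "L^r \<le> Lx^r" using L by (intro power_mono) auto
  have Lx0: "0 < Lx" using L by auto
  then have 1: "2*a/Lx^r \<le> 2*a/L^r" using \<open>L^r \<le> Lx^r\<close> a L0 by (intro divide_left_mono) auto
  have "L^r \<le> Ly^r" using L by (intro power_mono) auto
  have Ly0: "0 < Ly" using L by auto
  then have 2: "2*a/Ly^r \<le> 2*a/L^r" using \<open>L^r \<le> Ly^r\<close> a L0 by (intro divide_left_mono) auto
  have r1: "0 < real (r-1)" using r by auto
  have "L^(r-1) \<le> Ly^(r-1)" using L by (intro power_mono) auto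
  then have le: "real (r-1) * L^(r-1) \<le> real (r-1) * Ly^(r-1)" using r1 by simp
  have p1: "0 < real (r-1) * L^(r-1)" using r1 L0 by simp
  have p2: "0 < real (r-1) * Ly^(r-1)" using r1 Ly0 by simp
  have den: "0 < (real (r-1) * Ly^(r-1)) * (real (r-1) * L^(r-1))" using p2 p1 by (rule mult_pos_pos)
  have "0 \<le> sqrt 5 * a" using a by simp
  from divide_left_mono[OF le this den] have 3: "sqrt 5 * a / (real (r-1) * Ly^(r-1)) \<le> sqrt 5 * a / (real (r-1) * L^(r-1))" .
  have m: "a * (sqrt 5 / (real (r-1) * L^(r-1))) < a * (4 * zeta_nat r / (2*pi)^r + 10 / L^r)"
    by (rule mult_strict_left_mono[OF core_slack[OF L(1) r] a])
  have e1: "sqrt 5 * a / (real (r-1) * L^(r-1)) = a * (sqrt 5 / (real (r-1) * L^(r-1)))" by simp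
  have e2: "a * (4 * zeta_nat r / (2*pi)^r + 10 / L^r) = 4 * a * zeta_nat r / (2*pi)^r + 10 * a / L^r"
    by (simp add: distrib_left mult.commute mult.left_commute)
  have 4: "sqrt 5 * a / (real (r-1) * L^(r-1)) < 4 * a * zeta_nat r / (2*pi)^r + 10 * a / L^r"
    using m unfolding e1 e2 .
  have "2*a/L^r + 2*a/L^r + 10*a/L^r = 14*a/L^r" by (simp add: field_simps)
  then show ?thesis using 1 2 3 4 by (smt (verit))
qed

lemma lin_comb:
  fixes A B C D l m e e' F I u w e3 M1 M2 Z1 Z2 :: real
  shows "A = B + C \<Longrightarrow> B \<le> 2*D \<Longrightarrow> D \<le> l + m + e \<Longrightarrow> e \<le> e' \<Longrightarrow> C = F \<Longrightarrow>
    F \<le> I + u + w + e3 \<Longrightarrow> I \<le> M1 + M2 \<Longrightarrow> u + w + e3 < Z1 + Z2 \<Longrightarrow>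
    A < 2*(l + m + e') + M1 + M2 + Z1 + Z2"
  by (smt (verit))

lemma split_bound:
  fixes a b T x v y :: real and r s :: nat
  assumes v: "0 < v" "v \<le> 1" and T: "2 \<le> T" "1 \<le> ln T" and Ty: "T \<le> y" and yx: "y \<le> x"
    and a: "a > 0" and r: "r \<ge> 2" and PNT: "\<forall>t \<ge> T. \<bar>prime_pi t - li t\<bar> \<le> a * t / (ln t)^r"
    and b: "b > 0"
    and Mert: "(\<Sum>p | prime p \<and> real p \<le> y. 1 / real p) \<le> ln (ln y) + mertens_B + b / (ln y)^s"
  shows "(\<Sum>p | prime p \<and> real p \<le> x. cmod (tau p v) / real p)
     < 2 * (ln (ln y) + mertens_B + b / (ln T)^s) + 4/pi * (ln (ln x) - ln (ln y))
       + 4 * frak_m / (v * ln y) + 4 * a * zeta_nat r / (2*pi)^r + 14 * a / (ln T)^r"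
proof -
  have y2: "2 \<le> y" using T Ty by auto
  have lnTy: "ln T \<le> ln y" using T Ty by auto
  have lnyx: "ln y \<le> ln x" using y2 yx by auto
  define PS where "PS = {p::nat. prime p \<and> y < real p \<and> real p \<le> x}"
  have S: "(\<Sum>p | prime p \<and> real p \<le> x. cmod (tau p v) / real p) =
     (\<Sum>p | prime p \<and> real p \<le> y. cmod (tau p v) / real p) + (\<Sum>p\<in>PS. cmod (tau p v) / real p)"
    unfolding PS_def by (rule split_sum[OF yx])
  have S1: "(\<Sum>p | prime p \<and> real p \<le> y. cmod (tau p v) / real p) \<le> 2 * (\<Sum>p | prime p \<and> real p \<le> y. 1 / real p)"
  proof -
    have "(\<Sum>p | prime p \<and> real p \<le> y. cmod (tau p v) / real p) \<le> (\<Sum>p | prime p \<and> real p \<le> y. 2 / real p)"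
      by (intro sum_mono tau_le) auto
    also have "\<dots> = 2 * (\<Sum>p | prime p \<and> real p \<le> y. 1 / real p)" by (simp add: sum_distrib_left)
    finally show ?thesis .
  qed
  have bs: "b / (ln y)^s \<le> b / (ln T)^s"
    using b T lnTy by (intro divide_left_mono mult_pos_pos power_mono) auto
  have S2eq: "(\<Sum>p\<in>PS. cmod (tau p v) / real p) = (\<Sum>p\<in>PS. Ff v (real p))"
    by (intro sum.cong) (auto simp: PS_def tau_prime Ff_def)
  have PNTy: "\<forall>t \<ge> y. \<bar>prime_pi t - li t\<bar> \<le> a * t / (ln t)^r" using PNT Ty by auto
  have AB: "(\<Sum>p\<in>PS. Ff v (real p)) \<le> integral {y..x} (\<lambda>t. Ff v t / ln t) + 2*a/(ln x)^r + 2*a/(ln y)^r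
        + sqrt 5 * a / (real (r-1) * (ln y)^(r-1))"
    unfolding PS_def by (rule abel_bound[OF v y2 yx a r PNTy])
  have "(\<lambda>t. Ff v t / ln t) = (\<lambda>t. 2 * \<bar>cos (v * ln t / 2)\<bar> / (t * ln t))"
    by (auto simp: Ff_def)
  then have I: "integral {y..x} (\<lambda>t. Ff v t / ln t) \<le> 4/pi * (ln (ln x) - ln (ln y)) + 4 * frak_m / (v * ln y)"
    using main_int(2)[OF v(1) _ yx] y2 by simp
  have SL: "2*a/(ln x)^r + 2*a/(ln y)^r + sqrt 5 * a / (real (r-1) * (ln y)^(r-1))
         < 4 * a * zeta_nat r / (2*pi)^r + 14 * a / (ln T)^r"
    using T lnTy lnyx a r by (intro slack_full) auto
  define e3 where "e3 = sqrt 5 * a / (real (r - 1) * (ln y)^(r - 1))"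
  note AB' = AB[folded e3_def] and SL' = SL[folded e3_def]
  show ?thesis by (rule lin_comb[OF S S1 Mert bs S2eq AB' I SL'])
qed


lemma c3_arith:
  fixes S l B bb kv kl kx m' m Z :: real
  assumes "0 \<le> kv + kl" "S < 2*(l + B + bb) + (kx - kl) + m' + Z" "m' \<le> m"
  shows "S < 2*B + Z + 2*bb + (kx + kv + 2*l + m)"
  using assms by (smt (verit))

theorem lemma16:
  fixes a b T1 T2 q T x v :: real and r s :: nat
  assumes a_pos: "a > 0" and r_ge: "r \<ge> 2" and T1_ge: "T1 \<ge> 2"
    and PNT: "\<forall>t \<ge> T1. \<bar>prime_pi t - li t\<bar> \<le> a * t / (ln t) ^ r"
    and b_pos: "b > 0" and s_ge: "s \<ge> 1" and T2_ge: "T2 \<ge> 2"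
    and Mertens: "\<forall>t \<ge> T2. (\<Sum>p | prime p \<and> real p \<le> t. 1 / real p)
                     \<le> ln (ln t) + mertens_B + b / (ln t) ^ s"
    and q_ge: "q \<ge> 1"
    and T_ge: "max (exp q) (max T1 T2) \<le> T" and T_le: "T \<le> x"
    and v_ge: "0 \<le> v" and v_le: "v \<le> 1"
  shows "let E = (if v \<le> q / ln x then 2 * ln (ln x)
                  else if v \<le> q / ln T then
                    4 / pi * ln (ln x) - (2 - 4 / pi) * ln (v / q) + 4 * frak_m / q
                  else 4 / pi * ln (ln x) + 4 / pi * ln (v / q) + 2 * ln (ln T) + 4 * frak_m / q)
         in (\<Sum>p | prime p \<and> real p \<le> x. cmod (tau p v) / real p)
            < 2 * mertens_B + 4 * a * zeta_nat r / (2 * pi) ^ r + 14 * a / (ln T) ^ r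
              + 2 * b / (ln T) ^ s + E"
proof -
  have Tq: "exp q \<le> T" and TT1: "T1 \<le> T" and TT2: "T2 \<le> T" using T_ge by auto
  have T2': "2 \<le> T" using TT1 T1_ge by linarith
  have qlnT: "q \<le> ln T"
  proof -
    have "ln (exp q) \<le> ln T" using Tq T2' by (subst ln_le_cancel_iff) auto
    then show ?thesis by simp
  qed
  define L0 where "L0 = ln T"
  have L01: "1 \<le> L0" using qlnT q_ge unfolding L0_def by linarith
  have lnx: "L0 \<le> ln x" unfolding L0_def using T_le T2' by auto
  have PNT': "\<forall>t \<ge> T. \<bar>prime_pi t - li t\<bar> \<le> a * t / (ln t) ^ r" using PNT TT1 by auto
  define Z where "Z = 4 * a * zeta_nat r / (2 * pi) ^ r + 14 * a / (ln T) ^ r"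
  have Zpos: "0 < Z"
  proof -
    have "0 < 4 * a * zeta_nat r / (2 * pi) ^ r" using a_pos zeta_ge1[OF r_ge] by simp
    moreover have "0 < 14 * a / (ln T) ^ r" using a_pos L01 unfolding L0_def by simp
    ultimately show ?thesis unfolding Z_def by linarith
  qed
  define S where "S = (\<Sum>p | prime p \<and> real p \<le> x. cmod (tau p v) / real p)"
  have bT: "b / (ln t)^s \<le> b / (ln T)^s" if "L0 \<le> ln t" for t
    using b_pos L01 that unfolding L0_def by (intro divide_left_mono mult_pos_pos power_mono) auto
  consider (c1) "v \<le> q / ln x" | (c2) "\<not> v \<le> q / ln x" "v \<le> q / ln T" | (c3) "\<not> v \<le> q / ln x" "\<not> v \<le> q / ln T"
    by blast
  then show ?thesis
  proof cases
    case c1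
    have "S \<le> (\<Sum>p | prime p \<and> real p \<le> x. 2 / real p)"
      unfolding S_def by (intro sum_mono tau_le) auto
    also have "\<dots> = 2 * (\<Sum>p | prime p \<and> real p \<le> x. 1 / real p)" by (simp add: sum_distrib_left)
    finally have "S \<le> 2 * (\<Sum>p | prime p \<and> real p \<le> x. 1 / real p)" .
    moreover have "(\<Sum>p | prime p \<and> real p \<le> x. 1 / real p) \<le> ln (ln x) + mertens_B + b / (ln x) ^ s"
      using Mertens TT2 T_le by auto
    moreover have "b / (ln x)^s \<le> b / (ln T)^s" using bT lnx by auto
    ultimately have "S < 2 * mertens_B + Z + 2 * b / (ln T) ^ s + 2 * ln (ln x)"
      using Zpos by linarith
    then show ?thesis using c1 unfolding Let_def S_def Z_def by (simp add: add.assoc)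
  next
    case c2
    have lnx0: "0 < ln x" using lnx L01 by linarith
    have vq: "q / ln x < v" using c2 by simp
    have v0: "0 < v" using vq q_ge lnx0 by (smt (verit) divide_pos_pos)
    define y where "y = exp (q / v)"
    have lny: "ln y = q / v" unfolding y_def by simp
    have L0y: "L0 \<le> q / v"
    proof -
      have "v * L0 \<le> q" using c2(2) L01 unfolding L0_def by (simp add: le_divide_eq mult.commute)
      then show ?thesis using v0 by (simp add: le_divide_eq mult.commute)
    qed
    have yx': "q / v < ln x"
    proof -
      have "q < v * ln x" using vq lnx0 by (simp add: divide_less_eq mult.commute)
      then show ?thesis using v0 by (simp add: divide_less_eq mult.commute)
    qed
    have Ty: "T \<le> y"
    proof -
      have "exp (ln T) \<le> exp (q / v)" using L0y unfolding L0_def by simp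
      then show ?thesis unfolding y_def using T2' by simp
    qed
    have yx: "y \<le> x"
    proof -
      have "exp (q / v) \<le> exp (ln x)" using yx' by simp
      then show ?thesis unfolding y_def using T2' T_le by simp
    qed
    have Mert: "(\<Sum>p | prime p \<and> real p \<le> y. 1 / real p) \<le> ln (ln y) + mertens_B + b / (ln y)^s"
      using Mertens TT2 Ty by auto
    have SB: "S < 2 * (ln (ln y) + mertens_B + b / (ln T)^s) + 4/pi * (ln (ln x) - ln (ln y))
       + 4 * frak_m / (v * ln y) + Z"
      unfolding S_def Z_def
      using split_bound[OF v0 v_le T2' _ Ty yx a_pos r_ge PNT' b_pos Mert] L01 unfolding L0_def
      by (simp add: add.assoc)
    have "v * ln y = q" using lny v0 by simp
    moreover have "ln (v / q) = - ln (q / v)" using v0 q_ge by (simp add: ln_div)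
    moreover have "4/pi * (ln (ln x) - ln (q / v)) = 4/pi * ln (ln x) - 4/pi * ln (q / v)"
      by (simp add: right_diff_distrib)
    moreover have "(2 - 4/pi) * ln (q / v) = 2 * ln (q / v) - 4/pi * ln (q / v)"
      by (simp add: left_diff_distrib)
    ultimately have "S < 2 * mertens_B + Z + 2 * b / (ln T) ^ s +
        (4 / pi * ln (ln x) - (2 - 4 / pi) * ln (v / q) + 4 * frak_m / q)"
      using SB lny by simp
    then show ?thesis using c2 unfolding Let_def S_def Z_def by (simp add: add.assoc)
  next
    case c3
    have lnT0: "0 < ln T" using L01 unfolding L0_def by linarith
    have vq: "q / ln T < v" using c3 by simp
    have v0: "0 < v" using vq q_ge lnT0 by (smt (verit) divide_pos_pos)
    have qv: "q \<le> v * ln T" using vq lnT0 by (simp add: divide_less_eq mult.commute)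
    have Mert: "(\<Sum>p | prime p \<and> real p \<le> T. 1 / real p) \<le> ln (ln T) + mertens_B + b / (ln T)^s"
      using Mertens TT2 by auto
    have SB: "S < 2 * (ln (ln T) + mertens_B + b / (ln T)^s) + 4/pi * (ln (ln x) - ln (ln T))
       + 4 * frak_m / (v * ln T) + Z"
      unfolding S_def Z_def
      using split_bound[OF v0 v_le T2' _ order_refl T_le a_pos r_ge PNT' b_pos Mert] L01 unfolding L0_def
      by (simp add: add.assoc)
    have m4: "4 * frak_m / (v * ln T) \<le> 4 * frak_m / q"
      using frak_m_nonneg qv q_ge by (intro divide_left_mono) auto
    have lnpos: "0 \<le> ln (v / q) + ln (ln T)"
    proof -
      have "1 \<le> v / q * ln T" using qv q_ge by (simp add: field_simps)
      then have "0 \<le> ln (v / q * ln T)" by simp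
      also have "ln (v / q * ln T) = ln (v / q) + ln (ln T)"
        using v0 q_ge lnT0 by (intro ln_mult_pos) auto
      finally show ?thesis .
    qed
    have "0 \<le> 4/pi * (ln (v / q) + ln (ln T))" using lnpos by simp
    moreover have "4/pi * (ln (v / q) + ln (ln T)) = 4/pi * ln (v / q) + 4/pi * ln (ln T)"
      by (simp add: distrib_left)
    moreover have "4/pi * (ln (ln x) - ln (ln T)) = 4/pi * ln (ln x) - 4/pi * ln (ln T)"
      by (simp add: right_diff_distrib)
    ultimately have "S < 2 * mertens_B + Z + 2 * (b / (ln T) ^ s) +
        (4 / pi * ln (ln x) + 4 / pi * ln (v / q) + 2 * ln (ln T) + 4 * frak_m / q)"
      using c3_arith[of "4/pi * ln (v / q)" "4/pi * ln (ln T)" S "ln (ln T)" mertens_B "b / (ln T)^s"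
          "4/pi * ln (ln x)" "4 * frak_m / (v * ln T)" Z "4 * frak_m / q"] SB m4 by simp
    then have "S < 2 * mertens_B + Z + 2 * b / (ln T) ^ s +
        (4 / pi * ln (ln x) + 4 / pi * ln (v / q) + 2 * ln (ln T) + 4 * frak_m / q)" by simp
    then show ?thesis using c3 unfolding Let_def S_def Z_def by (simp add: add.assoc)
  qed
qed


end
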